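(* Let $k<l$ be positive integers and $\gamma\in PU(k,l)$. Then $\gamma$ has a fixed point in the closure $\overline{\mathbb{H}^{k,l}_{\mathbb{C}}}$ of $\mathbb{H}^{k,l}_{\mathbb{C}}$ in $\mathbb{P}^{k+l-1}_{\mathbb{C}}$.
   Context: $\mathbb{C}^{k,l}$ is $\mathbb{C}^{k+l}$ with the Hermitian form $\prec u,v\succ_{k,l}=-\sum_{j=1}^k u_j\bar v_j+\sum_{j=k+1}^{k+l}u_j\bar v_j$; $N_-^{k,l}$ is the set of vectors $v$ with $\prec v,v\succ_{k,l}<0$; $\mathbb{H}^{k,l}_{\mathbb{C}}=[N_-^{k,l}]\subset\mathbb{P}^{k+l-1}_{\mathbb{C}}$. $U(k,l)\subset GL(k+l,\mathbb{C})$ is the group preserving the form and $PU(k,l)$ its image in $PSL(k+l,\mathbb{C})$. The paper assumes $k<l$ throughout when using this notation. *)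

theory Defs
  imports Complex_Main "Jordan_Normal_Form.Determinant"
begin

definition herm_form :: "nat \<Rightarrow> nat \<Rightarrow> complex vec \<Rightarrow> complex vec \<Rightarrow> complex" where
  "herm_form k l u v =
     (\<Sum>j<k+l. (if j < k then -1 else 1) * (u $ j) * cnj (v $ j))"

definition neg_cone :: "nat \<Rightarrow> nat \<Rightarrow> complex vec set" where
  "neg_cone k l = {v \<in> carrier_vec (k+l). Re (herm_form k l v v) < 0}"

definition U_group :: "nat \<Rightarrow> nat \<Rightarrow> complex mat set" where
  "U_group k l = {A \<in> carrier_mat (k+l) (k+l). det A \<noteq> 0 \<and>
      (\<forall>u \<in> carrier_vec (k+l). \<forall>v \<in> carrier_vec (k+l).
         herm_form k l (A *\<^sub>v u) (A *\<^sub>v v) = herm_form k l u v)}"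

text \<open>A point [v] of P^{k+l-1} (v a nonzero vector of C^{k+l}) lies in the closure
  of H^{k,l} = [N_-^{k,l}] iff it is the limit, in P^{k+l-1}, of a sequence of points
  [w m] with w m in N_-; i.e. iff suitable representatives c m * w m of these points
  converge in C^{k+l} to v (the projective topology is the quotient topology, which
  is first countable, so sequential closure is the closure).\<close>
definition in_closure_H :: "nat \<Rightarrow> nat \<Rightarrow> complex vec \<Rightarrow> bool" where
  "in_closure_H k l v \<longleftrightarrow> v \<in> carrier_vec (k+l) \<and> v \<noteq> 0\<^sub>v (k+l) \<and>
     (\<exists>w c. (\<forall>m. w m \<in> neg_cone k l \<and> c m \<noteq> (0::complex)) \<and>
        (\<forall>j < k+l. (\<lambda>m. (c m \<cdot>\<^sub>v w m) $ j) \<longlonglongrightarrow> v $ j))"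

definition proj_fixed :: "complex mat \<Rightarrow> complex vec \<Rightarrow> bool" where
  "proj_fixed A v \<longleftrightarrow> (\<exists>\<mu>::complex. A *\<^sub>v v = \<mu> \<cdot>\<^sub>v v)"

end

theory Submission
  imports Defs "Jordan_Normal_Form.Jordan_Normal_Form_Existence"
begin

definition vsum :: "nat \<Rightarrow> 'i set \<Rightarrow> ('i \<Rightarrow> complex vec) \<Rightarrow> complex vec" where
  "vsum n I f = vec n (\<lambda>r. \<Sum>i\<in>I. f i $ r)"

lemma vsum_dim[simp]: "dim_vec (vsum n I f) = n" unfolding vsum_def by simp
lemma vsum_index[simp]: "r < n \<Longrightarrow> vsum n I f $ r = (\<Sum>i\<in>I. f i $ r)" unfolding vsum_def by simp

lemma mult_vsum:
  assumes A: "A \<in> carrier_mat n n" and f: "\<And>i. i \<in> I \<Longrightarrow> f i \<in> carrier_vec n"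
  shows "A *\<^sub>v vsum n I f = vsum n I (\<lambda>i. A *\<^sub>v f i)"
proof (rule eq_vecI)
  fix r assume "r < dim_vec (vsum n I (\<lambda>i. A *\<^sub>v f i))"
  then have r: "r < n" by simp
  have "(A *\<^sub>v vsum n I f) $ r = (\<Sum>t\<in>{0..<n}. row A r $ t * vsum n I f $ t)"
    using A r by (simp add: scalar_prod_def)
  also have "\<dots> = (\<Sum>t\<in>{0..<n}. A $$ (r,t) * (\<Sum>i\<in>I. f i $ t))"
    by (rule sum.cong[OF refl]) (use A r in simp)
  also have "\<dots> = (\<Sum>i\<in>I. \<Sum>t\<in>{0..<n}. A $$ (r,t) * f i $ t)"
    by (simp add: sum_distrib_left sum.swap[of _ I])
  also have "\<dots> = (\<Sum>i\<in>I. (A *\<^sub>v f i) $ r)"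
  proof (rule sum.cong[OF refl])
    fix i assume i: "i \<in> I"
    have fi: "dim_vec (f i) = n" using f[OF i] by simp
    have "(A *\<^sub>v f i) $ r = (\<Sum>t\<in>{0..<n}. row A r $ t * f i $ t)"
      using A r fi by (simp add: scalar_prod_def)
    also have "\<dots> = (\<Sum>t\<in>{0..<n}. A $$ (r,t) * f i $ t)"
      by (rule sum.cong[OF refl]) (use A r in simp)
    finally show "(\<Sum>t\<in>{0..<n}. A $$ (r,t) * f i $ t) = (A *\<^sub>v f i) $ r" by simp
  qed
  also have "\<dots> = vsum n I (\<lambda>i. A *\<^sub>v f i) $ r" using r by simp
  finally show "(A *\<^sub>v vsum n I f) $ r = vsum n I (\<lambda>i. A *\<^sub>v f i) $ r" .
qed (use A in simp)

lemma smult_vsum: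
  assumes f: "\<And>i. i \<in> I \<Longrightarrow> f i \<in> carrier_vec n"
  shows "vsum n I (\<lambda>i. a \<cdot>\<^sub>v f i) = a \<cdot>\<^sub>v vsum n I f"
proof (rule eq_vecI)
  fix r assume "r < dim_vec (a \<cdot>\<^sub>v vsum n I f)"
  then have r: "r < n" by simp
  have "vsum n I (\<lambda>i. a \<cdot>\<^sub>v f i) $ r = (\<Sum>i\<in>I. a * f i $ r)"
  proof -
    have "vsum n I (\<lambda>i. a \<cdot>\<^sub>v f i) $ r = (\<Sum>i\<in>I. (a \<cdot>\<^sub>v f i) $ r)" using r by simp
    also have "\<dots> = (\<Sum>i\<in>I. a * f i $ r)"
    proof (rule sum.cong[OF refl])
      fix i assume i: "i \<in> I"
      have "dim_vec (f i) = n" using f[OF i] by simp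
      then show "(a \<cdot>\<^sub>v f i) $ r = a * f i $ r" using r by simp
    qed
    finally show ?thesis .
  qed
  also have "\<dots> = (a \<cdot>\<^sub>v vsum n I f) $ r" using r by (simp add: sum_distrib_left)
  finally show "vsum n I (\<lambda>i. a \<cdot>\<^sub>v f i) $ r = (a \<cdot>\<^sub>v vsum n I f) $ r" .
qed simp

lemma hf_smult_l:
  assumes "u \<in> carrier_vec (k+l)"
  shows "herm_form k l (a \<cdot>\<^sub>v u) v = a * herm_form k l u v"
  using assms unfolding herm_form_def
  by (simp add: sum_distrib_left algebra_simps)

lemma hf_smult_r:
  assumes "v \<in> carrier_vec (k+l)"
  shows "herm_form k l u (a \<cdot>\<^sub>v v) = cnj a * herm_form k l u v"
  using assms unfolding herm_form_def
  by (simp add: sum_distrib_left algebra_simps)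

lemma hf_add_r:
  assumes v: "v \<in> carrier_vec (k+l)" and w: "w \<in> carrier_vec (k+l)"
  shows "herm_form k l u (v + w) = herm_form k l u v + herm_form k l u w"
proof -
  have "herm_form k l u (v + w) = (\<Sum>j<k+l. (if j < k then -1 else 1) * (u $ j) * cnj (v $ j)
      + (if j < k then -1 else 1) * (u $ j) * cnj (w $ j))"
    unfolding herm_form_def
  proof (rule sum.cong[OF refl])
    fix j assume "j \<in> {..<k+l}"
    then have "(v + w) $ j = v $ j + w $ j" using v w by simp
    then show "(if j < k then -1 else 1) * (u $ j) * cnj ((v + w) $ j) =
      (if j < k then -1 else 1) * (u $ j) * cnj (v $ j) + (if j < k then -1 else 1) * (u $ j) * cnj (w $ j)"
      by (simp add: distrib_left)
  qed
  then show ?thesis by (simp add: sum.distrib herm_form_def)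
qed

lemma hf_zero_l: "herm_form k l (0\<^sub>v (k+l)) v = 0"
  unfolding herm_form_def by simp

lemma vsum_carrier: "vsum n I f \<in> carrier_vec n"
  unfolding vsum_def by simp

lemma U_pres:
  assumes "A \<in> U_group k l" "u \<in> carrier_vec (k+l)" "v \<in> carrier_vec (k+l)"
  shows "herm_form k l (A *\<^sub>v u) (A *\<^sub>v v) = herm_form k l u v"
  using assms unfolding U_group_def by auto

lemma E1:
  assumes A: "A \<in> U_group k l" and v: "v \<in> carrier_vec (k+l)"
    and ev: "A *\<^sub>v v = ev_a \<cdot>\<^sub>v v" and nz: "herm_form k l v v \<noteq> 0"
  shows "ev_a * cnj ev_a = 1"
proof -
  have "herm_form k l v v = herm_form k l (ev_a \<cdot>\<^sub>v v) (ev_a \<cdot>\<^sub>v v)"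
    using U_pres[OF A v v] ev by simp
  also have "\<dots> = (ev_a * cnj ev_a) * herm_form k l v v"
    using v by (simp add: hf_smult_l hf_smult_r)
  finally show ?thesis using nz by simp
qed

lemma E2:
  assumes A: "A \<in> U_group k l" and u: "u \<in> carrier_vec (k+l)" and w: "w \<in> carrier_vec (k+l)"
    and eu: "A *\<^sub>v u = ev_a \<cdot>\<^sub>v u" and ew: "A *\<^sub>v w = ev_b \<cdot>\<^sub>v w"
    and nb: "ev_b * cnj ev_b = 1" and ne: "ev_a \<noteq> ev_b"
  shows "herm_form k l u w = 0"
proof (rule ccontr)
  assume nz: "herm_form k l u w \<noteq> 0"
  have "herm_form k l u w = herm_form k l (ev_a \<cdot>\<^sub>v u) (ev_b \<cdot>\<^sub>v w)"
    using U_pres[OF A u w] eu ew by simp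
  also have "\<dots> = (ev_a * cnj ev_b) * herm_form k l u w"
    using u w by (simp add: hf_smult_l hf_smult_r)
  finally have "ev_a * cnj ev_b = 1" using nz by simp
  then have "ev_a * (cnj ev_b * ev_b) = ev_b" by (metis mult.assoc mult_1)
  then show False using nb ne by (simp add: mult.commute)
qed

lemma E3:
  assumes A: "A \<in> U_group k l" and v1: "v1 \<in> carrier_vec (k+l)" and v2: "v2 \<in> carrier_vec (k+l)"
    and e1: "A *\<^sub>v v1 = ev_a \<cdot>\<^sub>v v1" and e2: "A *\<^sub>v v2 = ev_a \<cdot>\<^sub>v v2 + v1"
    and nz: "herm_form k l v1 v1 \<noteq> 0"
  shows False
proof -
  have na: "ev_a * cnj ev_a = 1" by (rule E1[OF A v1 e1 nz])
  have "herm_form k l v1 v2 = herm_form k l (ev_a \<cdot>\<^sub>v v1) (ev_a \<cdot>\<^sub>v v2 + v1)"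
    using U_pres[OF A v1 v2] e1 e2 by simp
  also have "\<dots> = (ev_a * cnj ev_a) * herm_form k l v1 v2 + ev_a * herm_form k l v1 v1"
    using v1 v2 by (simp add: hf_smult_l hf_smult_r hf_add_r algebra_simps)
  finally have "ev_a * herm_form k l v1 v1 = 0" using na by simp
  moreover have "ev_a \<noteq> 0" using na by auto
  ultimately show False using nz by simp
qed

lemma hf_vsum:
  assumes "finite I" "finite J"
  shows "herm_form k l (vsum (k+l) I f) (vsum (k+l) J g) =
    (\<Sum>i\<in>I. \<Sum>j\<in>J. herm_form k l (f i) (g j))"
proof -
  have "herm_form k l (vsum (k+l) I f) (vsum (k+l) J g) =
     (\<Sum>r<k+l. \<Sum>i\<in>I. \<Sum>j\<in>J. (if r < k then -1 else 1) * (f i $ r) * cnj (g j $ r))"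
    unfolding herm_form_def vsum_def
    by (intro sum.cong refl, simp add: sum_distrib_left sum_distrib_right cnj_sum algebra_simps)
  also have "\<dots> = (\<Sum>i\<in>I. \<Sum>r<k+l. \<Sum>j\<in>J. (if r < k then -1 else 1) * (f i $ r) * cnj (g j $ r))"
    by (rule sum.swap)
  also have "\<dots> = (\<Sum>i\<in>I. \<Sum>j\<in>J. herm_form k l (f i) (g j))"
    unfolding herm_form_def by (intro sum.cong refl, rule sum.swap)
  finally show ?thesis .
qed

lemma hf_self_Re:
  "Re (herm_form k l v v) = (\<Sum>j<k+l. (if j < k then -1 else 1) * Re (v $ j * cnj (v $ j)))"
  unfolding herm_form_def Re_sum
  by (intro sum.cong refl, simp add: mult.assoc)

lemma closure_lemma:
  assumes k: "0 < k" and v: "v \<in> carrier_vec (k+l)" "v \<noteq> 0\<^sub>v (k+l)"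
    and neg: "Re (herm_form k l v v) \<le> 0"
  shows "in_closure_H k l v"
proof -
  define s :: real where "s = (if 0 \<le> Re (v $ 0) then 1 else -1)"
  define t where "t = (\<lambda>m::nat. s * inverse (real (Suc m)))"
  define w where "w = (\<lambda>m. v + complex_of_real (t m) \<cdot>\<^sub>v unit_vec (k+l) 0)"
  have s2: "s * s = 1" "s * Re (v $ 0) \<ge> 0" unfolding s_def by auto
  have tpos: "t m * t m > 0" for m
  proof -
    have "t m \<noteq> 0" unfolding t_def s_def by auto
    then show ?thesis by (metis not_real_square_gt_zero)
  qed
  have tRe: "t m * Re (v $ 0) \<ge> 0" for m
  proof -
    have "t m * Re (v $ 0) = inverse (real (Suc m)) * (s * Re (v $ 0))" unfolding t_def by simp
    moreover have "inverse (real (Suc m)) * (s * Re (v $ 0)) \<ge> 0"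
      by (rule mult_nonneg_nonneg[OF _ s2(2)]) simp
    ultimately show ?thesis by metis
  qed
  have wc: "w m \<in> carrier_vec (k+l)" for m unfolding w_def using v by auto
  have wj: "w m $ j = v $ j + (if j = 0 then complex_of_real (t m) else 0)" if "j < k+l" for m j
    unfolding w_def using v that k by auto
  have neg_w: "Re (herm_form k l (w m) (w m)) < 0" for m
  proof -
    let ?fv = "\<lambda>j. (if j < k then -1 else 1) * Re (v $ j * cnj (v $ j))"
    let ?fw = "\<lambda>j. (if j < k then -1 else 1) * Re (w m $ j * cnj (w m $ j))"
    have eq: "?fw j = ?fv j + (if j = 0 then - (2 * t m * Re (v $ 0) + t m * t m) else 0)"
      if "j < k+l" for j
      unfolding wj[OF that] using that k by (auto simp: complex_mult_cnj power2_eq_square algebra_simps)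
    have "Re (herm_form k l (w m) (w m)) = (\<Sum>j<k+l. ?fw j)" by (rule hf_self_Re)
    also have "\<dots> = (\<Sum>j<k+l. ?fv j + (if j = 0 then - (2 * t m * Re (v $ 0) + t m * t m) else 0))"
      by (intro sum.cong refl eq) simp
    also have "\<dots> = Re (herm_form k l v v) - (2 * t m * Re (v $ 0) + t m * t m)"
      using k by (simp add: sum.distrib hf_self_Re)
    finally show ?thesis using neg tpos[of m] tRe[of m] by linarith
  qed
  have tl: "t \<longlonglongrightarrow> 0"
    unfolding t_def using tendsto_mult[OF tendsto_const[of s] LIMSEQ_inverse_real_of_nat] by simp
  show ?thesis unfolding in_closure_H_def
  proof (intro conjI exI[of _ w] exI[of _ "\<lambda>_. 1"] allI impI)
    fix m show "w m \<in> neg_cone k l" unfolding neg_cone_def using wc neg_w by auto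
  next
    fix m show "(1::complex) \<noteq> 0" by simp
  next
    fix j assume j: "j < k+l"
    have e: "(\<lambda>m. (1 \<cdot>\<^sub>v w m) $ j) = (\<lambda>m. v $ j + (if j = 0 then complex_of_real (t m) else 0))"
      using j wc by (auto simp: wj)
    have "(\<lambda>m. v $ j + (if j = 0 then complex_of_real (t m) else 0)) \<longlonglongrightarrow> v $ j + 0"
      by (intro tendsto_add tendsto_const, cases "j = 0", auto intro: tendsto_of_real[OF tl, simplified])
    then show "(\<lambda>m. (1 \<cdot>\<^sub>v w m) $ j) \<longlonglongrightarrow> v $ j" unfolding e by simp
  qed (use v in auto)
qed

lemma jm_struct:
  "\<exists>d s. (\<forall>i<sum_list (map fst n_as). \<forall>j<sum_list (map fst n_as).
      jordan_matrix n_as $$ (i,j) = (if i = j then d i else if Suc i = j \<and> s i then 1 else 0))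
    \<and> (\<forall>i. Suc i < sum_list (map fst n_as) \<longrightarrow> s i \<longrightarrow> d (Suc i) = d i)"
proof (induction n_as)
  case Nil
  then show ?case by simp
next
  case (Cons na n_as)
  obtain m a where na: "na = (m,a)" by force
  let ?N = "sum_list (map fst n_as)"
  from Cons obtain d s where
    ds: "\<forall>i<?N. \<forall>j<?N. jordan_matrix n_as $$ (i,j) = (if i = j then d i else if Suc i = j \<and> s i then 1 else 0)"
    and dd: "\<forall>i. Suc i < ?N \<longrightarrow> s i \<longrightarrow> d (Suc i) = d i" by blast
  define d' where "d' = (\<lambda>i. if i < m then a else d (i - m))"
  define s' where "s' = (\<lambda>i. if i < m then Suc i < m else s (i - m))"
  show ?case
  proof (intro exI[of _ d'] exI[of _ s'] conjI allI impI)
    fix i j assume i: "i < sum_list (map fst (na # n_as))" and j: "j < sum_list (map fst (na # n_as))"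
    then have i': "i < m + ?N" and j': "j < m + ?N" by (auto simp: na)
    show "jordan_matrix (na # n_as) $$ (i,j) = (if i = j then d' i else if Suc i = j \<and> s' i then 1 else 0)"
      unfolding na jordan_matrix_Cons
      using i' j' ds[rule_format, of "i - m" "j - m"]
      by (auto simp: d'_def s'_def)
  next
    fix i assume "Suc i < sum_list (map fst (na # n_as))" "s' i"
    then show "d' (Suc i) = d' i" using dd[rule_format, of "i - m"]
      by (auto simp: d'_def s'_def na Suc_diff_le split: if_splits)
  qed
qed


lemma row_col_sum:
  assumes "P \<in> carrier_mat n n" "J \<in> carrier_mat n n" "r < n" "j < n"
  shows "row P r \<bullet> col J j = (\<Sum>i<n. P $$ (r,i) * J $$ (i,j))"
  using assms unfolding scalar_prod_def by (auto simp: atLeast0LessThan intro: sum.cong)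

lemma colJ1:
  fixes P J :: "complex mat"
  assumes P: "P \<in> carrier_mat n n" and J: "J \<in> carrier_mat n n" and j: "j < n"
    and Jij: "\<forall>i<n. J $$ (i,j) = (if i = j then a else 0)"
  shows "P *\<^sub>v col J j = a \<cdot>\<^sub>v col P j"
proof (rule eq_vecI)
  fix r assume r: "r < dim_vec (a \<cdot>\<^sub>v col P j)"
  then have r': "r < n" using P by simp
  have "(P *\<^sub>v col J j) $ r = (\<Sum>i<n. P $$ (r,i) * (if i = j then a else 0))"
    using P J r' j Jij by (simp add: row_col_sum)
  also have "\<dots> = P $$ (r,j) * a"
    using j by (simp add: if_distrib[of "\<lambda>x. P $$ (r, _) * x"] cong: if_cong)
  finally show "(P *\<^sub>v col J j) $ r = (a \<cdot>\<^sub>v col P j) $ r" using P r' j by simp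
qed (use P in simp)

lemma colJ2:
  fixes P J :: "complex mat"
  assumes P: "P \<in> carrier_mat n n" and J: "J \<in> carrier_mat n n" and j: "Suc j < n"
    and Jij: "\<forall>i<n. J $$ (i,Suc j) = (if i = Suc j then a else if i = j then 1 else 0)"
  shows "P *\<^sub>v col J (Suc j) = a \<cdot>\<^sub>v col P (Suc j) + col P j"
proof (rule eq_vecI)
  fix r assume r: "r < dim_vec (a \<cdot>\<^sub>v col P (Suc j) + col P j)"
  then have r': "r < n" using P by simp
  have "(P *\<^sub>v col J (Suc j)) $ r = (\<Sum>i<n. P $$ (r,i) * (if i = Suc j then a else if i = j then 1 else 0))"
    using P J r' j Jij by (simp add: row_col_sum)
  also have "\<dots> = (\<Sum>i<n. (if i = Suc j then P $$ (r,i) * a else 0) + (if i = j then P $$ (r,i) else 0))"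
    by (intro sum.cong refl) auto
  also have "\<dots> = P $$ (r,Suc j) * a + P $$ (r,j)"
    using j by (simp add: sum.distrib)
  finally show "(P *\<^sub>v col J (Suc j)) $ r = (a \<cdot>\<^sub>v col P (Suc j) + col P j) $ r" using P r' j by simp
qed (use P in simp)


lemma vsum_cong:
  assumes h: "\<And>i. i \<in> I \<Longrightarrow> f i = g i"
  shows "vsum n I f = vsum n I g"
proof -
  have "(\<lambda>r. \<Sum>i\<in>I. f i $ r) = (\<lambda>r. \<Sum>i\<in>I. g i $ r)"
    using h by (intro ext sum.cong) auto
  then show ?thesis by (simp add: vsum_def)
qed

theorem mainTheorem13:
  fixes k l :: nat and A :: "complex mat"
  assumes "0 < k" and "k < l" and "A \<in> U_group k l"
  shows "\<exists>v. in_closure_H k l v \<and> proj_fixed A v"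
proof (rule ccontr)
  assume H: "\<not> ?thesis"
  define n where "n = k + l"
  have AU: "A \<in> U_group k l" by fact
  from assms(3) have Ac: "A \<in> carrier_mat n n" and dA: "det A \<noteq> 0"
    by (auto simp: U_group_def n_def)
  have pos: "Re (herm_form k l v v) > 0"
    if v: "v \<in> carrier_vec n" "v \<noteq> 0\<^sub>v n" "A *\<^sub>v v = mu \<cdot>\<^sub>v v" for v mu
  proof (rule ccontr)
    assume "\<not> ?thesis"
    then have "Re (herm_form k l v v) \<le> 0" by simp
    then have "in_closure_H k l v" using closure_lemma[OF assms(1)] v by (auto simp: n_def)
    moreover have "proj_fixed A v" using v unfolding proj_fixed_def by auto
    ultimately show False using H by auto
  qed
  have nz: "herm_form k l v v \<noteq> 0"
    if v: "v \<in> carrier_vec n" "v \<noteq> 0\<^sub>v n" "A *\<^sub>v v = mu \<cdot>\<^sub>v v" for v mu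
    using pos[OF v] by auto
  obtain as where "char_poly A = (\<Prod>a\<leftarrow>as. [:- a, 1:])"
    using char_poly_factorized[OF Ac] by auto
  then obtain n_as where "jordan_nf A n_as" using jordan_nf_exists[OF Ac] by blast
  then obtain P Q where sw: "similar_mat_wit A (jordan_matrix n_as) P Q"
    unfolding jordan_nf_def similar_mat_def by auto
  define J where "J = jordan_matrix n_as"
  note swD = similar_mat_witD2[OF Ac sw, folded J_def]
  have PQ: "P * Q = 1\<^sub>m n" and QP: "Q * P = 1\<^sub>m n" and AJ: "A = P * J * Q"
    and Jc: "J \<in> carrier_mat n n" and Pc: "P \<in> carrier_mat n n" and Qc: "Q \<in> carrier_mat n n"
    using swD by auto
  have Nn: "sum_list (map fst n_as) = n" using Jc unfolding J_def by auto
  obtain d s where Jent: "\<forall>i<n. \<forall>j<n. J $$ (i,j) = (if i = j then d i else if Suc i = j \<and> s i then 1 else 0)"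
    and dd: "\<forall>i. Suc i < n \<longrightarrow> s i \<longrightarrow> d (Suc i) = d i"
    using jm_struct[of n_as] unfolding Nn J_def by blast
  have AP: "A * P = P * J"
  proof -
    have "A * P = P * J * Q * P" using AJ by simp
    also have "\<dots> = (P * J) * (Q * P)"
      using assoc_mult_mat[of "P * J" n n Q n P n] Pc Jc Qc by auto
    also have "\<dots> = P * J" using QP Pc Jc by simp
    finally show ?thesis .
  qed
  define p where "p = (\<lambda>j. col P j)"
  have pc: "p j \<in> carrier_vec n" for j using Pc unfolding p_def by auto
  have pc': "p j \<in> carrier_vec (k+l)" for j using pc unfolding n_def .
  have Ap: "A *\<^sub>v p j = P *\<^sub>v col J j" if j: "j < n" for j
  proof -
    have "A *\<^sub>v p j = col (A * P) j" unfolding p_def using col_mult2[OF Ac Pc j] by simp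
    also have "\<dots> = P *\<^sub>v col J j" unfolding AP using col_mult2[OF Pc Jc j] by simp
    finally show ?thesis .
  qed
  have pnz: "p j \<noteq> 0\<^sub>v n" if j: "j < n" for j
  proof
    assume p0: "p j = 0\<^sub>v n"
    have "col (Q * P) j = Q *\<^sub>v p j" unfolding p_def using col_mult2[OF Qc Pc j] by simp
    then have "col (Q * P) j $ j = (Q *\<^sub>v p j) $ j" by simp
    also have "\<dots> = 0" using Qc j by (simp add: p0 scalar_prod_def)
    finally have "col (1\<^sub>m n) j $ j = (0::complex)" using QP by simp
    then show False using j by simp
  qed
  have eig1: "A *\<^sub>v p j = d j \<cdot>\<^sub>v p j" if j: "j < n" and ns: "\<not> (\<exists>i. Suc i = j \<and> s i)" for j
  proof -
    have "\<forall>i<n. J $$ (i,j) = (if i = j then d j else 0)"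
    proof (intro allI impI)
      fix i assume i: "i < n"
      have "J $$ (i,j) = (if i = j then d i else if Suc i = j \<and> s i then 1 else 0)"
        using Jent i j by blast
      moreover have "\<not> (Suc i = j \<and> s i)" using ns by blast
      ultimately show "J $$ (i,j) = (if i = j then d j else 0)" by simp
    qed
    from colJ1[OF Pc Jc j this] show ?thesis using Ap[OF j] unfolding p_def by simp
  qed
  have no_s: "\<not> s j" if "Suc j < n" for j
  proof
    assume "s j"
    define j0 where "j0 = (LEAST j. Suc j < n \<and> s j)"
    have j0: "Suc j0 < n \<and> s j0" unfolding j0_def
      by (rule LeastI[where P="\<lambda>j. Suc j < n \<and> s j"]) (use that \<open>s j\<close> in blast)
    have lt: "\<not> (Suc i < n \<and> s i)" if "i < j0" for i
      using not_less_Least[OF that[unfolded j0_def]] unfolding j0_def by blast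
    have j0n: "j0 < n" using j0 by simp
    have ns0: "\<not> (\<exists>i. Suc i = j0 \<and> s i)"
    proof
      assume "\<exists>i. Suc i = j0 \<and> s i"
      then obtain i where i: "Suc i = j0" "s i" by blast
      then have "i < j0" "Suc i < n" using j0 by simp_all
      then show False using lt i(2) by blast
    qed
    have e1: "A *\<^sub>v p j0 = d j0 \<cdot>\<^sub>v p j0" by (rule eig1[OF j0n ns0])
    have "\<forall>i<n. J $$ (i, Suc j0) = (if i = Suc j0 then d (Suc j0) else if i = j0 then 1 else 0)"
    proof (intro allI impI)
      fix i assume i: "i < n"
      have "J $$ (i,Suc j0) = (if i = Suc j0 then d i else if Suc i = Suc j0 \<and> s i then 1 else 0)"
        using Jent i j0 by blast
      then show "J $$ (i, Suc j0) = (if i = Suc j0 then d (Suc j0) else if i = j0 then 1 else 0)"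
        using j0 by auto
    qed
    from colJ2[OF Pc Jc _ this] j0
    have "P *\<^sub>v col J (Suc j0) = d (Suc j0) \<cdot>\<^sub>v p (Suc j0) + p j0" unfolding p_def by simp
    moreover have "A *\<^sub>v p (Suc j0) = P *\<^sub>v col J (Suc j0)" using Ap j0 by blast
    moreover have "d (Suc j0) = d j0" using dd j0 by blast
    ultimately have e2: "A *\<^sub>v p (Suc j0) = d j0 \<cdot>\<^sub>v p (Suc j0) + p j0"
      by simp
    show False
      by (rule E3[OF AU pc' pc' e1 e2 nz[OF pc pnz[OF j0n] e1]])
  qed
  have eig: "A *\<^sub>v p j = d j \<cdot>\<^sub>v p j" if j: "j < n" for j
  proof (rule eig1[OF j])
    show "\<not> (\<exists>i. Suc i = j \<and> s i)" using no_s j by blast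
  qed
  have dn: "d j * cnj (d j) = 1" if j: "j < n" for j
    by (rule E1[OF AU pc' eig[OF j] nz[OF pc pnz[OF j] eig[OF j]]])
  define x where "x = (unit_vec n 0 :: complex vec)"
  define c where "c = Q *\<^sub>v x"
  have xc: "x \<in> carrier_vec n" unfolding x_def by simp
  have cc: "c \<in> carrier_vec n" unfolding c_def using Qc xc by simp
  have Pcx: "P *\<^sub>v c = x"
    unfolding c_def using assoc_mult_mat_vec[OF Pc Qc xc] PQ xc by simp
  define G where "G = (\<lambda>a. {j\<in>{..<n}. d j = a})"
  define y where "y = (\<lambda>a. vsum n (G a) (\<lambda>j. (c $ j) \<cdot>\<^sub>v p j))"
  define L where "L = d ` {..<n}"
  have finL: "finite L" unfolding L_def by simp
  have xsum: "vsum n L y = x"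
  proof (rule eq_vecI)
    fix r assume "r < dim_vec x"
    then have r: "r < n" unfolding x_def by simp
    have "vsum n L y $ r = (\<Sum>a\<in>L. \<Sum>j\<in>G a. c $ j * P $$ (r,j))"
      using r Pc unfolding y_def vsum_def p_def G_def by (auto intro!: sum.cong)
    also have "\<dots> = (\<Sum>j<n. c $ j * P $$ (r,j))"
      unfolding G_def L_def by (rule sum.group) auto
    also have "\<dots> = (P *\<^sub>v c) $ r"
      using r Pc cc by (auto simp: scalar_prod_def atLeast0LessThan intro!: sum.cong)
    finally show "vsum n L y $ r = x $ r" using Pcx by simp
  qed (simp add: vsum_def x_def)
  have yc: "y a \<in> carrier_vec n" for a unfolding y_def by (rule vsum_carrier)
  have yev: "A *\<^sub>v y a = a \<cdot>\<^sub>v y a" for a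
  proof -
    have cpc: "\<And>j. c $ j \<cdot>\<^sub>v p j \<in> carrier_vec n" using pc by simp
    have "A *\<^sub>v y a = vsum n (G a) (\<lambda>j. A *\<^sub>v (c $ j \<cdot>\<^sub>v p j))"
      unfolding y_def by (rule mult_vsum[OF Ac cpc])
    also have "\<dots> = vsum n (G a) (\<lambda>j. a \<cdot>\<^sub>v (c $ j \<cdot>\<^sub>v p j))"
    proof (rule vsum_cong)
      fix j assume "j \<in> G a"
      then have j: "j < n" and dj: "d j = a" unfolding G_def by auto
      have "A *\<^sub>v (c $ j \<cdot>\<^sub>v p j) = c $ j \<cdot>\<^sub>v (A *\<^sub>v p j)" using mult_mat_vec[OF Ac pc] by simp
      also have "\<dots> = a \<cdot>\<^sub>v (c $ j \<cdot>\<^sub>v p j)" using eig[OF j] dj by (simp add: smult_smult_assoc mult.commute)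
      finally show "A *\<^sub>v (c $ j \<cdot>\<^sub>v p j) = a \<cdot>\<^sub>v (c $ j \<cdot>\<^sub>v p j)" .
    qed
    also have "\<dots> = a \<cdot>\<^sub>v y a" unfolding y_def by (rule smult_vsum[OF cpc])
    finally show ?thesis .
  qed
  have La: "a * cnj a = 1" if "a \<in> L" for a using dn that unfolding L_def by auto
  have yc': "y a \<in> carrier_vec (k+l)" for a using yc by (simp add: n_def)
  have hx: "herm_form k l x x = (\<Sum>a\<in>L. \<Sum>b\<in>L. herm_form k l (y a) (y b))"
    using hf_vsum[OF finL finL, of k l y y] xsum by (simp add: n_def)
  also have "\<dots> = (\<Sum>a\<in>L. herm_form k l (y a) (y a))"
  proof (rule sum.cong[OF refl])
    fix a assume a: "a \<in> L"
    have "(\<Sum>b\<in>L. herm_form k l (y a) (y b)) = (\<Sum>b\<in>L. if b = a then herm_form k l (y a) (y a) else 0)"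
      by (rule sum.cong[OF refl]) (use E2[OF AU yc' yc' yev yev La] in auto)
    also have "\<dots> = herm_form k l (y a) (y a)" using a finL by simp
    finally show "(\<Sum>b\<in>L. herm_form k l (y a) (y b)) = herm_form k l (y a) (y a)" .
  qed
  finally have "Re (herm_form k l x x) = (\<Sum>a\<in>L. Re (herm_form k l (y a) (y a)))" by simp
  also have "\<dots> \<ge> 0"
  proof (rule sum_nonneg)
    fix a assume "a \<in> L"
    show "Re (herm_form k l (y a) (y a)) \<ge> 0"
    proof (cases "y a = 0\<^sub>v n")
      case True then show ?thesis by (simp add: n_def hf_zero_l)
    next
      case False then show ?thesis using pos[OF yc False yev] by simp
    qed
  qed
  finally have ge: "Re (herm_form k l x x) \<ge> 0" .
  have "Re (herm_form k l x x) = (\<Sum>j<k+l. if j = 0 then -1 else 0)"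
    unfolding hf_self_Re by (intro sum.cong refl) (use assms(1) in \<open>auto simp: x_def n_def\<close>)
  also have "\<dots> = -1" using assms(1) by simp
  finally show False using ge by simp
qed

end
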